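(* In the setting of the context, let $1\le i\le 2n$ and let $C$ be any point of the segment $N_{i-\frac12}N_{i+\frac12}$. Then $C$ lies in the region $\overline M$ bounded by $M$.
   Context: $[x,y]$ denotes the determinant of the matrix with columns $x,y\in\mathbb{R}^2$. Fix $n\ge2$; indices (integer and half-integer) are read modulo $2n$. $U$ is a convex $2n$-gon with distinct vertices $U_1,\dots,U_{2n}$ in counterclockwise order with $U_{i+n}=-U_i$, and $V_{i+\frac12}=(U_{i+1}-U_i)/[U_i,U_{i+1}]$. Let $c>0$ and let $P$ be a convex polygon with nonempty interior and vertex list $P_1,\dots,P_{2n}$ (listed counterclockwise, consecutive entries may coincide) with $P_{i+1}-P_i$ a nonnegative multiple of $V_{i+\frac12}$ and $P_i-P_{i+n}=2cU_i$ for all $i$. The central equidistant $M$ is the closed polygonal curve with vertices $M_i=\frac12(P_i+P_{i+n})$; define $\alpha_{i+\frac12}$ by $M_{i+1}-M_i=\alpha_{i+\frac12}(U_{i+1}-U_i)$, $\beta_i=\frac12\sum_{j=i}^{i+n-1}\alpha_{j+\frac12}[U_j,U_{j+1}]$, and $N_{i+\frac12}=M_i+\beta_iV_{i+\frac12}$. The exterior of $M$ is the set of points of the plane that can be joined to a point of (the boundary curve of) $P$ by a continuous path not meeting $M$, and $\overline M$ is the complement of the exterior of $M$. *)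

theory Defs
  imports "HOL-Analysis.Analysis"
begin

text \<open>Points of the plane are vectors in real^2. Indices (integer and half-integer)
  are integers read modulo 2n; the half-integer index i + 1/2 is encoded by the integer i.\<close>

definition det2 :: "real^2 \<Rightarrow> real^2 \<Rightarrow> real" where
  "det2 x y = x$1 * y$2 - x$2 * y$1"

text \<open>Convexity + ccw order: every other vertex lies
  strictly to the left of each directed edge U_i U_{i+1}.\<close>
definition sym_convex_polygon :: "nat \<Rightarrow> (int \<Rightarrow> real^2) \<Rightarrow> bool" where
  "sym_convex_polygon n U \<longleftrightarrow>
     (\<forall>i. U (i + 2 * int n) = U i) \<and>
     (\<forall>i. U (i + int n) = - U i) \<and>
     (\<forall>i j. U i = U j \<longrightarrow> i mod (2 * int n) = j mod (2 * int n)) \<and>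
     (\<forall>i j. j mod (2 * int n) \<noteq> i mod (2 * int n) \<and> j mod (2 * int n) \<noteq> (i + 1) mod (2 * int n)
        \<longrightarrow> det2 (U (i + 1) - U i) (U j - U i) > 0)"

definition Vh :: "(int \<Rightarrow> real^2) \<Rightarrow> int \<Rightarrow> real^2" where
  "Vh U i = (1 / det2 (U i) (U (i + 1))) *\<^sub>R (U (i + 1) - U i)"

definition Mv :: "nat \<Rightarrow> (int \<Rightarrow> real^2) \<Rightarrow> int \<Rightarrow> real^2" where
  "Mv n P i = (1/2) *\<^sub>R (P i + P (i + int n))"

definition betaf :: "nat \<Rightarrow> (int \<Rightarrow> real^2) \<Rightarrow> (int \<Rightarrow> real) \<Rightarrow> int \<Rightarrow> real" where
  "betaf n U alpha i = (1/2) * (\<Sum>j\<in>{i .. i + int n - 1}. alpha j * det2 (U j) (U (j + 1)))"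

definition Nh :: "nat \<Rightarrow> (int \<Rightarrow> real^2) \<Rightarrow> (int \<Rightarrow> real^2) \<Rightarrow> (int \<Rightarrow> real) \<Rightarrow> int \<Rightarrow> real^2" where
  "Nh n U P alpha i = Mv n P i + betaf n U alpha i *\<^sub>R Vh U i"

definition Mcurve :: "nat \<Rightarrow> (int \<Rightarrow> real^2) \<Rightarrow> (real^2) set" where
  "Mcurve n P = (\<Union>i\<in>{1 .. 2 * int n}. closed_segment (Mv n P i) (Mv n P (i + 1)))"

definition Ppoly :: "nat \<Rightarrow> (int \<Rightarrow> real^2) \<Rightarrow> (real^2) set" where
  "Ppoly n P = convex hull (P ` {1 .. 2 * int n})"

definition exteriorM :: "nat \<Rightarrow> (int \<Rightarrow> real^2) \<Rightarrow> (real^2) set" where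
  "exteriorM n P = {x. \<exists>g. path g \<and> pathstart g = x \<and> pathfinish g \<in> frontier (Ppoly n P)
                        \<and> path_image g \<inter> Mcurve n P = {}}"

definition Mbar :: "nat \<Rightarrow> (int \<Rightarrow> real^2) \<Rightarrow> (real^2) set" where
  "Mbar n P = - exteriorM n P"

end

theory Submission
  imports Defs
begin



lemma det2_add_left: "det2 (a + b) c = det2 a c + det2 b c" by (simp add: det2_def algebra_simps)
lemma det2_add_right: "det2 c (a + b) = det2 c a + det2 c b" by (simp add: det2_def algebra_simps)
lemma det2_diff_left: "det2 (a - b) c = det2 a c - det2 b c" by (simp add: det2_def algebra_simps)
lemma det2_diff_right: "det2 c (a - b) = det2 c a - det2 c b" by (simp add: det2_def algebra_simps)
lemma det2_minus_left: "det2 (- a) c = - det2 a c" by (simp add: det2_def algebra_simps)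
lemma det2_minus_right: "det2 c (- a) = - det2 c a" by (simp add: det2_def algebra_simps)
lemma det2_scale_left: "det2 (r *\<^sub>R a) c = r * det2 a c" by (simp add: det2_def algebra_simps)
lemma det2_scale_right: "det2 c (r *\<^sub>R a) = r * det2 c a" by (simp add: det2_def algebra_simps)
lemma det2_self: "det2 a a = 0" by (simp add: det2_def algebra_simps)
lemma det2_swap: "det2 a b = - det2 b a" by (simp add: det2_def algebra_simps)
lemma det2_zero_left: "det2 0 a = 0" and det2_zero_right: "det2 a 0 = 0" by (simp_all add: det2_def)

lemmas det2_simps = det2_add_left det2_add_right det2_diff_left det2_diff_right det2_minus_left
  det2_minus_right det2_scale_left det2_scale_right det2_self det2_zero_left det2_zero_right

lemma det2_parallel:
  assumes "det2 u q = 0" "u \<noteq> 0"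
  shows "q = ((q \<bullet> u) / (u \<bullet> u)) *\<^sub>R u"
proof -
  have uu: "u \<bullet> u = u$1*u$1 + u$2*u$2" by (simp add: inner_vec_def sum_2)
  have qu: "q \<bullet> u = q$1*u$1 + q$2*u$2" by (simp add: inner_vec_def sum_2)
  have pos: "u$1*u$1 + u$2*u$2 \<noteq> 0"
  proof
    assume "u$1*u$1 + u$2*u$2 = 0"
    then have "u$1 = 0" "u$2 = 0" by (simp_all add: add_nonneg_eq_0_iff)
    then have "u = 0" by (simp add: vec_eq_iff forall_2)
    with assms show False by simp
  qed
  have d: "u$1 * q$2 = u$2 * q$1" using assms(1) by (simp add: det2_def)
  have e1: "(q$1*u$1 + q$2*u$2) * u$1 = q$1 * (u$1*u$1 + u$2*u$2)" using d by (simp add: algebra_simps)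
  have e2: "(q$1*u$1 + q$2*u$2) * u$2 = q$2 * (u$1*u$1 + u$2*u$2)" using d by (simp add: algebra_simps)
  have "q$1 = (q$1*u$1 + q$2*u$2) / (u$1*u$1 + u$2*u$2) * u$1"
  proof -
    have "(q$1*u$1 + q$2*u$2) / (u$1*u$1 + u$2*u$2) * u$1 = ((q$1*u$1 + q$2*u$2) * u$1) / (u$1*u$1 + u$2*u$2)" by simp
    also have "\<dots> = (q$1 * (u$1*u$1 + u$2*u$2)) / (u$1*u$1 + u$2*u$2)" using e1 by simp
    also have "\<dots> = q$1" using pos by simp
    finally show ?thesis by simp
  qed
  moreover have "q$2 = (q$1*u$1 + q$2*u$2) / (u$1*u$1 + u$2*u$2) * u$2"
  proof -
    have "(q$1*u$1 + q$2*u$2) / (u$1*u$1 + u$2*u$2) * u$2 = ((q$1*u$1 + q$2*u$2) * u$2) / (u$1*u$1 + u$2*u$2)" by simp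
    also have "\<dots> = (q$2 * (u$1*u$1 + u$2*u$2)) / (u$1*u$1 + u$2*u$2)" using e2 by simp
    also have "\<dots> = q$2" using pos by simp
    finally show ?thesis by simp
  qed
  ultimately show ?thesis unfolding uu qu
    by (simp add: vec_eq_iff forall_2)
qed

lemma det2_indep_zero:
  assumes "det2 a y = 0" "det2 b y = 0" "det2 a b \<noteq> 0"
  shows "y = 0"
proof -
  have h1: "a$1*y$2 - a$2*y$1 = 0" and h2: "b$1*y$2 - b$2*y$1 = 0" and h3: "a$1*b$2 - a$2*b$1 \<noteq> 0"
    using assms by (auto simp: det2_def)
  have "(a$1*b$2 - a$2*b$1) * y$1 = b$1 * (a$1*y$2 - a$2*y$1) - a$1 * (b$1*y$2 - b$2*y$1)"
    by (simp add: algebra_simps)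
  then have "(a$1*b$2 - a$2*b$1) * y$1 = 0" by (simp only: h1 h2 mult_zero_right diff_zero)
  then have y1: "y$1 = 0" using h3 by (metis mult_eq_0_iff)
  have "(a$1*b$2 - a$2*b$1) * y$2 = b$2 * (a$1*y$2 - a$2*y$1) - a$2 * (b$1*y$2 - b$2*y$1)"
    by (simp add: algebra_simps)
  then have "(a$1*b$2 - a$2*b$1) * y$2 = 0" by (simp only: h1 h2 mult_zero_right diff_zero)
  then have y2: "y$2 = 0" using h3 by (metis mult_eq_0_iff)
  show ?thesis using y1 y2 by (simp add: vec_eq_iff forall_2)
qed




lemma mod_ne_int:
  fixes x y :: int and N :: int
  assumes "0 < x - y" "x - y < N"
  shows "x mod N \<noteq> y mod N"
proof
  assume "x mod N = y mod N"
  then have "N dvd (x - y)" by (simp add: mod_eq_dvd_iff)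
  then have "N \<le> x - y" using assms(1) by (simp add: zdvd_imp_le)
  with assms(2) show False by simp
qed

lemma mod_ne_int':
  fixes x y :: int and N :: int
  assumes "0 < x - y \<and> x - y < N \<or> 0 < y - x \<and> y - x < N"
  shows "x mod N \<noteq> y mod N"
  using assms mod_ne_int by metis

lemma pos_from_nonneg:
  fixes q :: "int \<Rightarrow> real"
  assumes zb: "\<forall>j. q j = 0 \<longrightarrow> q (j - 1) * q (j + 1) < 0"
    and nn: "\<forall>m. a - 1 \<le> m \<and> m \<le> b + 1 \<longrightarrow> q (k + m) \<ge> 0"
    and m: "a \<le> m" "m \<le> b"
  shows "q (k + m) > 0"
proof (rule ccontr)
  assume "\<not> q (k + m) > 0"
  moreover have "q (k + m) \<ge> 0" using nn m by simp
  ultimately have "q (k + m) = 0" by simp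
  then have "q (k + m - 1) * q (k + m + 1) < 0" using zb by blast
  moreover have "q (k + (m - 1)) \<ge> 0" "q (k + (m + 1)) \<ge> 0" using nn m by auto
  ultimately show False by (simp add: algebra_simps) (smt (verit) mult_nonneg_nonneg)
qed

lemma seq_good:
  fixes q :: "int \<Rightarrow> real" and n :: nat and k :: int
  assumes n2: "n \<ge> 2" and anti: "\<forall>j. q (j + int n) = - q j"
    and zb: "\<forall>j. q j = 0 \<longrightarrow> q (j - 1) * q (j + 1) < 0"
    and ge: "\<forall>l. 1 \<le> l \<and> l \<le> int n - 1 \<longrightarrow> q (k + l) \<ge> 0"
  shows "\<exists>k'. \<forall>l. 1 \<le> l \<and> l \<le> int n - 1 \<longrightarrow> q (k' + l) > 0"
proof (cases "q k > 0")
  case True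
  have nn: "\<forall>m. 1 - 1 \<le> m \<and> m \<le> (int n - 2) + 1 \<longrightarrow> q (k + m) \<ge> 0"
  proof (intro allI impI)
    fix m :: int assume "1 - 1 \<le> m \<and> m \<le> (int n - 2) + 1"
    then show "q (k + m) \<ge> 0" using True ge by (cases "m = 0") auto
  qed
  show ?thesis
  proof (intro exI allI impI)
    fix l :: int assume l: "1 \<le> l \<and> l \<le> int n - 1"
    show "q (k - 1 + l) > 0"
    proof (cases "l = 1")
      case True then show ?thesis using \<open>q k > 0\<close> by simp
    next
      case False
      then have "q (k + (l - 1)) > 0" using pos_from_nonneg[OF zb nn, of "l - 1"] l by auto
      then show ?thesis by (simp add: algebra_simps)
    qed
  qed
next
  case False
  show ?thesis
  proof (cases "q k < 0")
    case True
    have qn: "q (k + int n) > 0" using anti True by simp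
    have nn: "\<forall>m. 2 - 1 \<le> m \<and> m \<le> (int n - 1) + 1 \<longrightarrow> q (k + m) \<ge> 0"
    proof (intro allI impI)
      fix m :: int assume "2 - 1 \<le> m \<and> m \<le> (int n - 1) + 1"
      then show "q (k + m) \<ge> 0" using qn ge by (cases "m = int n") auto
    qed
    show ?thesis
    proof (intro exI allI impI)
      fix l :: int assume l: "1 \<le> l \<and> l \<le> int n - 1"
      show "q (k + 1 + l) > 0"
      proof (cases "l = int n - 1")
        case True then have e: "k + 1 + l = k + int n" by simp
          show ?thesis unfolding e by (rule qn)
      next
        case False
        then have "q (k + (l + 1)) > 0" using pos_from_nonneg[OF zb nn, of "l + 1"] l by auto
        then show ?thesis by (simp add: algebra_simps)
      qed
    qed
  next
    case False
    then have q0: "q k = 0" using \<open>\<not> q k > 0\<close> by simp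
    have qn: "q (k + int n) = 0" using anti q0 by simp
    have nn: "\<forall>m. 1 - 1 \<le> m \<and> m \<le> (int n - 1) + 1 \<longrightarrow> q (k + m) \<ge> 0"
    proof (intro allI impI)
      fix m :: int assume "1 - 1 \<le> m \<and> m \<le> (int n - 1) + 1"
      then show "q (k + m) \<ge> 0" using qn q0 ge by (cases "m = int n \<or> m = 0") auto
    qed
    show ?thesis
      using pos_from_nonneg[OF zb nn] by blast
  qed
qed

lemma int_ivt:
  fixes f :: "int \<Rightarrow> real"
  shows "f a \<le> 0 \<Longrightarrow> f (a + int N) > 0 \<Longrightarrow> \<exists>j. a \<le> j \<and> j < a + int N \<and> f j \<le> 0 \<and> f (j + 1) > 0"
proof (induction N arbitrary: a)
  case 0 then show ?case by simp
next
  case (Suc N)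
  show ?case
  proof (cases "f (a + 1) > 0")
    case True then show ?thesis using Suc.prems by (intro exI[of _ a]) auto
  next
    case False
    have "f (a + 1 + int N) > 0" using Suc.prems by (simp add: algebra_simps)
    then obtain j where "a + 1 \<le> j \<and> j < a + 1 + int N \<and> f j \<le> 0 \<and> f (j + 1) > 0"
      using Suc.IH[of "a + 1"] False by auto
    then show ?thesis by (intro exI[of _ j]) auto
  qed
qed




definition convcond :: "nat \<Rightarrow> (int \<Rightarrow> real^2) \<Rightarrow> bool" where
  "convcond n W \<longleftrightarrow> (\<forall>i j. j mod (2 * int n) \<noteq> i mod (2 * int n) \<and> j mod (2 * int n) \<noteq> (i + 1) mod (2 * int n)
        \<longrightarrow> det2 (W (i + 1) - W i) (W j - W i) > 0)"

lemma convcondD: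
  assumes "convcond n W" "0 < j - i \<and> j - i < 2 * int n \<or> 0 < i - j \<and> i - j < 2 * int n"
    "0 < j - (i+1) \<and> j - (i+1) < 2 * int n \<or> 0 < (i+1) - j \<and> (i+1) - j < 2 * int n"
  shows "det2 (W (i + 1) - W i) (W j - W i) > 0"
  using assms mod_ne_int' unfolding convcond_def by metis

lemma ao_base:
  assumes n2: "n \<ge> 2" and sym: "\<forall>i. W (i + int n) = - W i" and cv: "convcond n W"
  shows "det2 (W k) (W (k + 1)) > 0"
proof -
  have "det2 (W (k + 1) - W k) (W (k + int n) - W k) > 0"
    using n2 by (intro convcondD[OF cv]) auto
  then have "det2 (W (k + 1) - W k) (- 2 *\<^sub>R W k) > 0" using sym
    by (simp add: algebra_simps scaleR_2)
  then show ?thesis by (simp add: det2_simps det2_swap[of "W (k+1)"])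
qed

lemma ao:
  assumes n2: "n \<ge> 2" and sym: "\<forall>i. W (i + int n) = - W i" and cv: "convcond n W"
  shows "1 \<le> l \<Longrightarrow> l \<le> n - 1 \<Longrightarrow> det2 (W k) (W (k + int l)) > 0"
proof (induction l rule: nat_induct_at_least)
  case base
  then show ?case using ao_base[OF n2 sym cv] by simp
next
  case (Suc l)
  define u where "u = W k"
  define w where "w = W (k + 1)"
  define a where "a = W (k + int l)"
  define b where "b = W (k + int l + 1)"
  have l: "1 \<le> l" "l + 1 \<le> n - 1" using Suc by auto
  have ua: "det2 u a > 0" using Suc l unfolding u_def a_def by auto
  have uw: "det2 u w > 0" using ao_base[OF n2 sym cv, of k] unfolding u_def w_def by simp
  have wn: "W (k + int n + 1) = - w" using sym[rule_format, of "k+1"] unfolding w_def by (simp add: algebra_simps)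
  have un: "W (k + int n) = - u" using sym unfolding u_def by simp
  have "det2 (W (k + int n + 1) - W (k + int n)) (W (k + int l) - W (k + int n)) > 0"
    by (rule convcondD[OF cv]) (use l in auto)
  then have iv: "det2 (u - w) (a + u) > 0"
    using un wn unfolding a_def by (simp add: algebra_simps)
  have "det2 (W (k + int n + 1) - W (k + int n)) (W (k + int l + 1) - W (k + int n)) > 0"
    by (rule convcondD[OF cv]) (use l in auto)
  then have v: "det2 (u - w) (b + u) > 0"
    using un wn unfolding b_def by (simp add: algebra_simps)
  have "det2 (W (k + int l + 1) - W (k + int l)) (W (k + int n) - W (k + int l)) > 0"
    by (rule convcondD[OF cv]) (use l in auto)
  then have vi: "det2 (b - a) (- u - a) > 0"
    using un unfolding a_def b_def by (simp add: algebra_simps)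
  show ?case
  proof (rule ccontr)
    assume "\<not> det2 (W k) (W (k + int (Suc l))) > 0"
    then have ub: "det2 u b \<le> 0" unfolding u_def b_def by (simp add: algebra_simps)
    define D where "D = det2 u a - det2 u b"
    have Dpos: "D > 0" using ua ub unfolding D_def by simp
    define Q where "Q = (- det2 u b) *\<^sub>R a + det2 u a *\<^sub>R b"
    have uQ: "det2 u Q = 0" unfolding Q_def by (simp add: det2_simps)
    have u0: "u \<noteq> 0" using uw by (auto simp: det2_simps)
    obtain s where s: "Q = s *\<^sub>R u" using det2_parallel[OF uQ u0] by blast
    have "Q + D *\<^sub>R u = (- det2 u b) *\<^sub>R (a + u) + det2 u a *\<^sub>R (b + u)"
      unfolding Q_def D_def by (simp add: algebra_simps)
    then have "det2 (u - w) (Q + D *\<^sub>R u) = (- det2 u b) * det2 (u - w) (a + u) + det2 u a * det2 (u - w) (b + u)"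
      by (simp add: det2_simps)
    also have "\<dots> > 0" using iv v ua ub
      by (smt (verit) mult_nonneg_nonneg mult_pos_pos)
    finally have "det2 (u - w) ((s + D) *\<^sub>R u) > 0" using s by (simp add: algebra_simps)
    then have "(s + D) * det2 u w > 0" by (simp add: det2_simps det2_swap[of w u])
    then have sD: "s + D > 0" using uw by (simp add: zero_less_mult_iff)
    have "Q - D *\<^sub>R a = det2 u a *\<^sub>R (b - a)" unfolding Q_def D_def by (simp add: algebra_simps)
    then have "det2 (b - a) (Q - D *\<^sub>R a) = 0" by (simp add: det2_simps)
    then have "det2 (b - a) (- D *\<^sub>R u - Q) = D * det2 (b - a) (- u - a)"
      by (simp add: det2_simps algebra_simps)
    also have "\<dots> > 0" using Dpos vi by simp
    finally have "det2 (b - a) (- (s + D) *\<^sub>R u) > 0" using s by (simp add: algebra_simps)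
    then have "0 < (- s - D) * (det2 b u - det2 a u)" by (simp add: det2_simps)
    then have "(s + D) * det2 (b - a) u < 0" by (simp add: det2_simps algebra_simps)
    then have "det2 (b - a) u < 0" using sD by (simp add: mult_less_0_iff)
    then have "det2 u b > det2 u a" by (simp add: det2_simps det2_swap[of _ u])
    with ua ub show False by simp
  qed
qed




lemma per_int:
  fixes f :: "int \<Rightarrow> 'a"
  assumes "\<forall>j. f (j + N) = f j"
  shows "f (j + z * N) = f j"
proof (induct z rule: int_induct[where k=0])
  case base then show ?case by simp
next
  case (step1 z)
  have "f (j + (z + 1) * N) = f ((j + z * N) + N)" by (simp add: algebra_simps)
  also have "\<dots> = f (j + z * N)" using assms by blast
  finally show ?case using step1 by simp
next
  case (step2 z)
  have "f (j + z * N) = f ((j + (z - 1) * N) + N)" by (simp add: algebra_simps)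
  also have "\<dots> = f (j + (z - 1) * N)" using assms by blast
  finally show ?case using step2 by simp
qed

lemma mod_suc_cancel:
  fixes m i N :: int
  assumes "(m + 1) mod N = (i + 1) mod N" shows "m mod N = i mod N"
  using assms by (simp add: mod_eq_dvd_iff)

locale setting =
  fixes n :: nat and U P :: "int \<Rightarrow> real^2" and c :: real and alpha :: "int \<Rightarrow> real"
  assumes n2: "n \<ge> 2"
    and U: "sym_convex_polygon n U"
    and c: "c > 0"
    and Pper: "\<forall>k. P (k + 2 * int n) = P k"
    and Pedge: "\<forall>k. \<exists>t\<ge>0. P (k + 1) - P k = t *\<^sub>R Vh U k"
    and Psym: "\<forall>k. P k - P (k + int n) = (2 * c) *\<^sub>R U k"
    and Pint: "interior (Ppoly n P) \<noteq> {}"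
    and alpha: "\<forall>k. Mv n P (k + 1) - Mv n P k = alpha k *\<^sub>R (U (k + 1) - U k)"
begin

definition e :: "int \<Rightarrow> real^2" where "e j = U (j + 1) - U j"
definition d :: "int \<Rightarrow> real" where "d j = det2 (U j) (U (j + 1))"
definition V :: "int \<Rightarrow> real^2" where "V j = Vh U j"
definition M :: "int \<Rightarrow> real^2" where "M j = Mv n P j"
definition p :: "int \<Rightarrow> real^2 \<Rightarrow> real" where "p j X = det2 (e j) (X - M j)"

lemma Uper: "U (j + 2 * int n) = U j" using U unfolding sym_convex_polygon_def by blast
lemma Usym: "U (j + int n) = - U j" using U unfolding sym_convex_polygon_def by blast
lemma Ucv: "convcond n U" using U unfolding sym_convex_polygon_def convcond_def by blast

lemma Usym_all: "\<forall>i. U (i + int n) = - U i" using Usym by blast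
lemma d_pos: "d j > 0" using ao_base[OF n2 Usym_all Ucv] unfolding d_def by simp
lemma e_sym: "e (j + int n) = - e j" unfolding e_def using Usym[of j] Usym[of "j+1"] by (simp add: algebra_simps)
lemma d_sym: "d (j + int n) = d j" unfolding d_def using Usym[of j] Usym[of "j+1"] by (simp add: algebra_simps det2_simps)
lemma e_per: "e (j + 2 * int n) = e j" unfolding e_def using Uper[of j] Uper[of "j+1"] by (simp add: algebra_simps)

lemma e_turn: "det2 (e (j - 1)) (e j) > 0"
proof -
  have m1: "(j+1) mod (2 * int n) \<noteq> (j-1) mod (2 * int n)" by (rule mod_ne_int) (use n2 in simp_all)
  have m2: "(j+1) mod (2 * int n) \<noteq> (j-1+1) mod (2 * int n)" by (rule mod_ne_int) (use n2 in simp_all)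
  have "det2 (U (j - 1 + 1) - U (j - 1)) (U (j + 1) - U (j - 1)) > 0"
    using Ucv m1 m2 unfolding convcond_def by blast
  moreover have "det2 (U (j - 1 + 1) - U (j - 1)) (U (j + 1) - U (j - 1)) = det2 (e (j - 1)) (e j)"
    unfolding e_def by (simp add: det2_def algebra_simps)
  ultimately show ?thesis by simp
qed

lemma kappa: "det2 (U (j - 1)) (e j) < d j"
proof -
  have m1: "(j-1) mod (2 * int n) \<noteq> j mod (2 * int n)" by (rule mod_ne_int') (use n2 in simp_all)
  have m2: "(j-1) mod (2 * int n) \<noteq> (j+1) mod (2 * int n)" by (rule mod_ne_int') (use n2 in simp_all)
  have "det2 (U (j + 1) - U j) (U (j - 1) - U j) > 0"
    using Ucv m1 m2 unfolding convcond_def by blast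
  moreover have "d j - det2 (U (j - 1)) (e j) = det2 (U (j + 1) - U j) (U (j - 1) - U j)"
    unfolding e_def d_def by (simp add: det2_def algebra_simps)
  ultimately show ?thesis by simp
qed

lemma V_def': "V j = (1 / d j) *\<^sub>R e j" unfolding V_def Vh_def d_def e_def by simp
lemma V_sym: "V (j + int n) = - V j" unfolding V_def' using e_sym d_sym by simp
lemma V_per: "V (j + 2 * int n) = V j"
proof -
  have "V (j + 2 * int n) = V ((j + int n) + int n)" by (simp add: algebra_simps)
  also have "\<dots> = V j" by (simp only: V_sym minus_minus)
  finally show ?thesis .
qed
lemma det2_scaleR_inv: "det2 a ((1 / r) *\<^sub>R b) = det2 a b / r" by (simp add: det2_def algebra_simps divide_simps)
lemma UV1: "det2 (U j) (V j) = 1"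
proof -
  have "det2 (U j) (e j) = d j" unfolding e_def d_def by (simp add: det2_def algebra_simps)
  then show ?thesis using d_pos[of j] unfolding V_def' det2_scaleR_inv by simp
qed
lemma UV2: "det2 (U (j + 1)) (V j) = 1"
proof -
  have "det2 (U (j + 1)) (e j) = d j" unfolding e_def d_def by (simp add: det2_def algebra_simps)
  then show ?thesis using d_pos[of j] unfolding V_def' det2_scaleR_inv by simp
qed

lemma UV_lt:
  assumes "m mod (2 * int n) \<noteq> (i + 1) mod (2 * int n)" "m mod (2 * int n) \<noteq> i mod (2 * int n)"
  shows "det2 (U (i + 1)) (V m) < 1"
proof -
  have "(m + 1) mod (2 * int n) \<noteq> (i + 1) mod (2 * int n)" using assms(2) mod_suc_cancel by blast
  then have "(i + 1) mod (2 * int n) \<noteq> m mod (2 * int n) \<and> (i + 1) mod (2 * int n) \<noteq> (m + 1) mod (2 * int n)"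
    using assms(1) by auto
  then have "det2 (U (m + 1) - U m) (U (i + 1) - U m) > 0"
    using Ucv unfolding convcond_def by blast
  moreover have "d m - det2 (U (i + 1)) (e m) = det2 (U (m + 1) - U m) (U (i + 1) - U m)"
    unfolding e_def d_def by (simp add: det2_def algebra_simps)
  ultimately have "det2 (U (i + 1)) (e m) < d m" by simp
  then show ?thesis using d_pos[of m] unfolding V_def' det2_scaleR_inv by simp
qed

lemma V_cv: "convcond n V"
  unfolding convcond_def
proof (intro allI impI)
  fix i j assume ij: "j mod (2 * int n) \<noteq> i mod (2 * int n) \<and> j mod (2 * int n) \<noteq> (i + 1) mod (2 * int n)"
  have u0: "U (i + 1) \<noteq> 0" using d_pos[of "i+1"] unfolding d_def by (auto simp: det2_def)
  have "det2 (U (i + 1)) (V (i + 1) - V i) = det2 (U (i + 1)) (V (i + 1)) - det2 (U (i + 1)) (V i)"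
    by (simp add: det2_def algebra_simps)
  then have "det2 (U (i + 1)) (V (i + 1) - V i) = 0"
    using UV1[of "i+1"] UV2[of i] by simp
  then obtain r where r: "V (i + 1) - V i = r *\<^sub>R U (i + 1)"
    using det2_parallel[OF _ u0] by blast
  have "det2 (e i) (e (i + 1)) > 0" using e_turn[of "i+1"] by simp
  moreover have "det2 (V i) (V (i + 1)) = det2 (e i) (e (i + 1)) / (d i * d (i + 1))"
    unfolding V_def' by (simp add: det2_def algebra_simps divide_simps)
  ultimately have vv: "det2 (V i) (V (i + 1)) > 0" using d_pos[of i] d_pos[of "i+1"] by simp
  have "det2 (V (i + 1) - V i) (- V i) = det2 (V i) (V (i + 1))"
    by (simp add: det2_def algebra_simps)
  moreover have "det2 (V (i + 1) - V i) (- V i) = - r * det2 (U (i + 1)) (V i)"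
    unfolding r by (simp add: det2_def algebra_simps)
  ultimately have rneg: "r < 0" using vv UV2[of i] by simp
  have lt: "det2 (U (i + 1)) (V j) < 1" using UV_lt ij by blast
  have "det2 (V (i + 1) - V i) (V j - V i) = r * (det2 (U (i + 1)) (V j) - det2 (U (i + 1)) (V i))"
    unfolding r by (simp add: det2_def algebra_simps)
  also have "\<dots> = r * (det2 (U (i + 1)) (V j) - 1)" using UV2[of i] by simp
  also have "\<dots> > 0" using rneg lt by (simp add: mult_neg_neg)
  finally show "det2 (V (i + 1) - V i) (V j - V i) > 0" .
qed

lemma V_sym_all: "\<forall>i. V (i + int n) = - V i" using V_sym by blast

lemma sorted_e:
  assumes "1 \<le> l" "l \<le> n - 1"
  shows "det2 (e k) (e (k + int l)) > 0"
proof -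
  have "det2 (V k) (V (k + int l)) > 0"
    using ao[OF n2 V_sym_all V_cv, of l k] assms by simp
  moreover have "det2 (V k) (V (k + int l)) = det2 (e k) (e (k + int l)) / (d k * d (k + int l))"
    unfolding V_def' by (simp add: det2_def algebra_simps divide_simps)
  moreover have "d k * d (k + int l) > 0" using d_pos[of k] d_pos[of "k + int l"] by simp
  ultimately show ?thesis by (simp add: zero_less_divide_iff)
qed

end




lemma cont_nth: "continuous_on S (\<lambda>X::real^2. X $ i)"
  by (rule linear_continuous_on[OF bounded_linear_vec_nth])

context setting begin

lemma Pper_all: "\<forall>j. P (j + 2 * int n) = P j" using Pper by blast
lemma P_int: "P (j + z * (2 * int n)) = P j" using per_int[OF Pper_all] by blast

lemma M_n: "M (j + int n) = M j"
proof -
  have "P (j + int n + int n) = P j" using Pper[rule_format, of j] by (simp add: algebra_simps)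
  then show ?thesis unfolding M_def Mv_def by (simp add: algebra_simps)
qed
lemma M_per: "M (j + 2 * int n) = M j" using M_n[of "j + int n"] M_n[of j] by (simp add: algebra_simps)
lemma M_per_all: "\<forall>j. M (j + 2 * int n) = M j" using M_per by blast
lemma M_int: "M (j + z * (2 * int n)) = M j" using per_int[OF M_per_all] by blast

lemma Mdiff: "M (j + 1) - M j = alpha j *\<^sub>R e j" using alpha unfolding M_def e_def by blast
lemma e_nz: "e j \<noteq> 0" using d_pos[of j] unfolding e_def d_def by (auto simp: det2_def)

lemma alpha_sym: "alpha (j + int n) = - alpha j"
proof -
  have "alpha (j + int n) *\<^sub>R e (j + int n) = M (j + int n + 1) - M (j + int n)" using Mdiff by simp
  also have "\<dots> = M (j + 1) - M j" using M_n[of "j+1"] M_n[of j] by (simp add: algebra_simps)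
  also have "\<dots> = alpha j *\<^sub>R e j" using Mdiff by simp
  finally have h: "- (alpha (j + int n) *\<^sub>R e j) = alpha j *\<^sub>R e j" using e_sym[of j] by simp
  have "(alpha (j + int n) + alpha j) *\<^sub>R e j = alpha (j + int n) *\<^sub>R e j + alpha j *\<^sub>R e j"
    by (rule scaleR_left_distrib)
  also have "\<dots> = 0" unfolding h[symmetric] by simp
  finally have "alpha (j + int n) + alpha j = 0" using e_nz[of j] by simp
  then show ?thesis by simp
qed

lemma seg_sub: "closed_segment (M j) (M (j + 1)) \<subseteq> Mcurve n P"
proof -
  define j' where "j' = (j - 1) mod (2 * int n) + 1"
  define z where "z = (j - 1) div (2 * int n)"
  have jj: "j = j' + z * (2 * int n)" unfolding j'_def z_def
    by (metis add.commute add_diff_cancel_left' diff_add_cancel minus_mod_eq_mult_div mult.commute add.assoc)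
  have "(j - 1) mod (2 * int n) < 2 * int n" "0 \<le> (j - 1) mod (2 * int n)" using n2 by simp_all
  then have "1 \<le> j'" "j' \<le> 2 * int n" unfolding j'_def by auto
  moreover have "M j = M j'" "M (j + 1) = M (j' + 1)"
    using jj M_int[of j' z] M_int[of "j'+1" z] by (simp_all add: algebra_simps)
  ultimately show ?thesis unfolding Mcurve_def M_def by auto
qed

lemma P_in: "P j \<in> Ppoly n P"
proof -
  define j' where "j' = (j - 1) mod (2 * int n) + 1"
  define z where "z = (j - 1) div (2 * int n)"
  have jj: "j = j' + z * (2 * int n)" unfolding j'_def z_def
    by (metis add.commute add_diff_cancel_left' diff_add_cancel minus_mod_eq_mult_div mult.commute add.assoc)
  have "(j - 1) mod (2 * int n) < 2 * int n" "0 \<le> (j - 1) mod (2 * int n)" using n2 by simp_all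
  then have "1 \<le> j'" "j' \<le> 2 * int n" unfolding j'_def by auto
  moreover have "P j = P j'" using jj P_int[of j' z] by simp
  ultimately show ?thesis unfolding Ppoly_def by (auto intro: hull_inc)
qed

lemma convex_P: "convex (Ppoly n P)" unfolding Ppoly_def by (rule convex_convex_hull)
lemma compact_P: "compact (Ppoly n P)" unfolding Ppoly_def by (rule compact_convex_hull, rule finite_imp_compact) simp

lemma M_in: "M j \<in> Ppoly n P"
proof -
  have "M j = (1/2) *\<^sub>R P j + (1 - 1/2) *\<^sub>R P (j + int n)" unfolding M_def Mv_def by (simp add: algebra_simps)
  also have "\<dots> \<in> Ppoly n P" using convex_P P_in by (intro convexD) auto
  finally show ?thesis .
qed

lemma Mcurve_sub: "Mcurve n P \<subseteq> Ppoly n P"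
  unfolding Mcurve_def
proof (intro UN_least)
  fix j assume "j \<in> {1..2 * int n}"
  show "closed_segment (Mv n P j) (Mv n P (j + 1)) \<subseteq> Ppoly n P"
    using M_in[of j] M_in[of "j+1"] convex_P unfolding M_def by (simp add: closed_segment_subset)
qed

lemma p_anti: "p (j + int n) X = - p j X"
  unfolding p_def using e_sym[of j] M_n[of j] by (simp add: det2_def algebra_simps)
lemma p_per: "p (j + 2 * int n) X = p j X"
  unfolding p_def using e_per[of j] M_per[of j] by simp
lemma p_per_all: "\<forall>j. p (j + 2 * int n) X = p j X" using p_per by blast
lemma p_int: "p (j + z * (2 * int n)) X = p j X" using per_int[of "\<lambda>j. p j X", OF p_per_all] by blast
lemma p_lin: "p j (X + t *\<^sub>R v) = p j X + t * det2 (e j) v"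
  unfolding p_def by (simp add: det2_def algebra_simps)

lemma p_cont: "continuous_on S (p j)"
proof -
  have "p j = (\<lambda>X. e j $ 1 * (X $ 2 - M j $ 2) - e j $ 2 * (X $ 1 - M j $ 1))"
    unfolding p_def det2_def by (auto simp: fun_eq_iff)
  then show ?thesis by (simp add: cont_nth continuous_intros)
qed

lemma zb:
  assumes X: "X \<notin> Mcurve n P"
  shows "p j X = 0 \<longrightarrow> p (j - 1) X * p (j + 1) X < 0"
proof
  assume pj: "p j X = 0"
  obtain u where u: "X - M j = u *\<^sub>R e j"
    using det2_parallel[OF pj[unfolded p_def] e_nz] by blast
  have XM: "X = M j + u *\<^sub>R e j" using u by (simp add: algebra_simps)
  have M0: "M j = M (j - 1) + alpha (j - 1) *\<^sub>R e (j - 1)" using Mdiff[of "j - 1"] by (simp add: algebra_simps)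
  have M1: "M (j + 1) = M j + alpha j *\<^sub>R e j" using Mdiff[of j] by (simp add: algebra_simps)
  have A: "p (j - 1) X = u * det2 (e (j - 1)) (e j)"
    unfolding p_def XM M0 by (simp add: det2_def algebra_simps)
  have B: "p (j + 1) X = - (u - alpha j) * det2 (e j) (e (j + 1))"
    unfolding p_def XM M1 by (simp add: det2_def algebra_simps)
  have t1: "det2 (e (j - 1)) (e j) > 0" by (rule e_turn)
  have t2: "det2 (e j) (e (j + 1)) > 0" using e_turn[of "j+1"] by simp
  have "u * (u - alpha j) > 0"
  proof (rule ccontr)
    assume nle: "\<not> u * (u - alpha j) > 0"
    have "X \<in> closed_segment (M j) (M (j + 1))"
    proof (cases "alpha j = 0")
      case True
      then have "u = 0" using nle by (simp add: not_less) (metis mult_eq_0_iff not_square_less_zero le_less_trans linorder_neqE_linordered_idom not_less mult_pos_pos)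
      then show ?thesis using XM by simp
    next
      case False
      define t where "t = u / alpha j"
      have "u = t * alpha j" unfolding t_def using False by simp
      then have "t * alpha j * (t * alpha j - alpha j) \<le> 0" using nle by simp
      then have "(t * (t - 1)) * (alpha j * alpha j) \<le> 0" by (simp add: algebra_simps)
      moreover have "alpha j * alpha j > 0" using False by (cases "alpha j > 0") (auto simp: zero_less_mult_iff)
      ultimately have "t * (t - 1) \<le> 0"
      proof -
        assume a1: "(t * (t - 1)) * (alpha j * alpha j) \<le> 0" and a2: "alpha j * alpha j > 0"
        show ?thesis
        proof (rule ccontr)
          assume "\<not> t * (t - 1) \<le> 0"
          then have "t * (t - 1) > 0" by linarith
          then have "(t * (t - 1)) * (alpha j * alpha j) > 0" using a2 by (rule mult_pos_pos)
          then show False using a1 by linarith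
        qed
      qed
      then have t01: "0 \<le> t" "t \<le> 1" by (auto simp: mult_le_0_iff)
      have "X = (1 - t) *\<^sub>R M j + t *\<^sub>R M (j + 1)" unfolding XM M1 \<open>u = t * alpha j\<close> by (simp add: algebra_simps)
      then show ?thesis unfolding closed_segment_def using t01 by blast
    qed
    then show False using X subsetD[OF seg_sub] by metis
  qed
  moreover have "p (j - 1) X * p (j + 1) X = - ((u * (u - alpha j)) * (det2 (e (j - 1)) (e j) * det2 (e j) (e (j + 1))))"
    unfolding A B by (simp add: algebra_simps)
  moreover have "det2 (e (j - 1)) (e j) * det2 (e j) (e (j + 1)) > 0" using t1 t2 by (rule mult_pos_pos)
  ultimately show "p (j - 1) X * p (j + 1) X < 0" by (simp add: mult_pos_pos)
qed

end



context setting begin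

definition Gd :: "real^2 \<Rightarrow> bool" where
  "Gd X \<longleftrightarrow> (\<exists>k. \<forall>l. 1 \<le> l \<and> l \<le> int n - 1 \<longrightarrow> p (k + l) X > 0)"
definition G2 :: "real^2 \<Rightarrow> bool" where
  "G2 X \<longleftrightarrow> (\<exists>k\<in>{0..<2 * int n}. \<forall>l\<in>{1..int n - 1}. p (k + l) X \<ge> 0)"

lemma open_Gd: "open {X. Gd X}"
proof -
  have "{X. Gd X} = (\<Union>k. \<Inter>l\<in>{1..int n - 1}. {X. 0 < p (k + l) X})"
  proof (intro set_eqI iffI)
    fix X assume "X \<in> {X. Gd X}"
    then obtain k where k: "\<forall>l. 1 \<le> l \<and> l \<le> int n - 1 \<longrightarrow> p (k + l) X > 0" unfolding Gd_def by blast
    then have "X \<in> (\<Inter>l\<in>{1..int n - 1}. {X. 0 < p (k + l) X})" by simp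
    then show "X \<in> (\<Union>k. \<Inter>l\<in>{1..int n - 1}. {X. 0 < p (k + l) X})" by blast
  next
    fix X assume "X \<in> (\<Union>k. \<Inter>l\<in>{1..int n - 1}. {X. 0 < p (k + l) X})"
    then obtain k where "X \<in> (\<Inter>l\<in>{1..int n - 1}. {X. 0 < p (k + l) X})" by blast
    then have "\<forall>l. 1 \<le> l \<and> l \<le> int n - 1 \<longrightarrow> p (k + l) X > 0" by simp
    then show "X \<in> {X. Gd X}" unfolding Gd_def by blast
  qed
  moreover have "open (\<Inter>l\<in>{1..int n - 1}. {X. 0 < p (k + l) X})" for k
    by (intro open_INT finite_atLeastAtMost_int ballI open_Collect_less p_cont continuous_on_const)
  ultimately show ?thesis by (simp add: open_UN)
qed

lemma closed_G2: "closed {X. G2 X}"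
proof -
  have "{X. G2 X} = (\<Union>k\<in>{0..<2 * int n}. \<Inter>l\<in>{1..int n - 1}. {X. 0 \<le> p (k + l) X})"
    unfolding G2_def by auto
  moreover have "closed (\<Inter>l\<in>{1..int n - 1}. {X. 0 \<le> p (k + l) X})" for k
    by (intro closed_INT ballI closed_Collect_le p_cont continuous_on_const)
  ultimately show ?thesis by (simp add: closed_UN)
qed

lemma Gd_G2: "Gd X \<Longrightarrow> G2 X"
proof -
  assume "Gd X"
  then obtain k where k: "\<forall>l. 1 \<le> l \<and> l \<le> int n - 1 \<longrightarrow> p (k + l) X > 0" unfolding Gd_def by blast
  define k0 where "k0 = k mod (2 * int n)"
  define z where "z = k div (2 * int n)"
  have kk: "k = k0 + z * (2 * int n)" unfolding k0_def z_def by (metis add.commute div_mult_mod_eq)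
  have "k0 \<in> {0..<2 * int n}" unfolding k0_def using n2 by simp
  moreover have "\<forall>l\<in>{1..int n - 1}. p (k0 + l) X \<ge> 0"
  proof
    fix l assume "l \<in> {1..int n - 1}"
    then have "p (k + l) X > 0" using k by auto
    moreover have "p (k + l) X = p (k0 + l) X" unfolding kk using p_int[of "k0 + l" z X] by (simp add: algebra_simps)
    ultimately show "p (k0 + l) X \<ge> 0" by simp
  qed
  ultimately show "G2 X" unfolding G2_def by blast
qed

lemma G2_Gd: "G2 X \<Longrightarrow> X \<notin> Mcurve n P \<Longrightarrow> Gd X"
proof -
  assume "G2 X" "X \<notin> Mcurve n P"
  then obtain k where k0: "\<forall>l\<in>{1..int n - 1}. p (k + l) X \<ge> 0" unfolding G2_def by blast
  then have k: "\<forall>l. 1 \<le> l \<and> l \<le> int n - 1 \<longrightarrow> p (k + l) X \<ge> 0" by simp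
  have anti: "\<forall>j. p (j + int n) X = - p j X" using p_anti by blast
  have z: "\<forall>j. p j X = 0 \<longrightarrow> p (j - 1) X * p (j + 1) X < 0" using zb[OF \<open>X \<notin> Mcurve n P\<close>] by blast
  show "Gd X" unfolding Gd_def using seq_good[of n "\<lambda>j. p j X", OF n2 anti z k] by blast
qed

lemma conn_Gd:
  assumes S: "connected S" "S \<inter> Mcurve n P = {}" and ab: "a \<in> S" "b \<in> S" and Ga: "Gd a"
  shows "Gd b"
proof -
  define T where "T = S \<inter> {X. Gd X}"
  have o: "openin (top_of_set S) T" unfolding T_def using open_Gd by (rule openin_open_Int)
  have "T = S \<inter> {X. G2 X}" unfolding T_def using S(2) Gd_G2 G2_Gd by blast
  then have cl: "closedin (top_of_set S) T" using closedin_closed_Int[OF closed_G2] by simp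
  have "T = {} \<or> T = S" using S(1) o cl unfolding connected_clopen by blast
  moreover have "a \<in> T" unfolding T_def using ab Ga by simp
  ultimately show ?thesis using ab unfolding T_def by blast
qed

end



lemma cramer_scalar:
  "det2 a b * det2 w v = det2 v b * det2 w a + det2 a v * det2 w b"
  by (simp add: det2_def algebra_simps)

context setting begin

lemma closed_P: "closed (Ppoly n P)" using compact_P by (rule compact_imp_closed)

lemma good_dir:
  assumes v0: "v \<noteq> 0"
  shows "\<exists>k. \<forall>l. 1 \<le> l \<and> l \<le> int n - 1 \<longrightarrow> det2 (e (k + l)) v > 0"
proof -
  define s where "s j = det2 (e j) v" for j
  have s_sym: "s (j + int n) = - s j" for j unfolding s_def using e_sym[of j] by (simp add: det2_def)
  have s_per: "s (j + 2 * int n) = s j" for j unfolding s_def using e_per[of j] by simp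
  obtain m where sm: "s m \<noteq> 0"
  proof (cases "s 0 = 0 \<and> s 1 = 0")
    case True
    have "det2 (e 0) (e 1) > 0" using e_turn[of 1] by simp
    then have "v = 0" using True unfolding s_def by (intro det2_indep_zero[of "e 0" v "e 1"]) auto
    with v0 show ?thesis by simp
  next
    case False then show ?thesis using that by blast
  qed
  obtain m' where sm': "s m' > 0"
  proof (cases "s m > 0")
    case True then show ?thesis using that by blast
  next
    case False then have "s (m + int n) > 0" using sm s_sym[of m] by simp
    then show ?thesis using that by blast
  qed
  have "s (m' + int n) \<le> 0" using sm' s_sym[of m'] by simp
  moreover have "s (m' + int n + int n) > 0" using sm' s_per[of m'] by (simp add: algebra_simps)
  ultimately obtain k where k: "s k \<le> 0" "s (k + 1) > 0"
    using int_ivt[of s "m' + int n" n] by blast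
  have "\<forall>l. 1 \<le> l \<and> l \<le> int n - 1 \<longrightarrow> s (k + l) > 0"
  proof (intro allI impI)
    fix l :: int assume l: "1 \<le> l \<and> l \<le> int n - 1"
    define ln where "ln = nat l"
    have lln: "l = int ln" "1 \<le> ln" "ln \<le> n - 1" unfolding ln_def using l by auto
    have D: "det2 (e k) (e (k + 1)) > 0" using e_turn[of "k+1"] by simp
    have a1: "det2 (e k) (e (k + l)) > 0" using sorted_e[of ln k] lln by simp
    have a2: "det2 (e (k + 1)) (e (k + l)) \<ge> 0"
    proof (cases "ln = 1")
      case True then show ?thesis using lln by (simp add: det2_self)
    next
      case False
      then have "det2 (e (k + 1)) (e (k + 1 + int (ln - 1))) > 0" using sorted_e[of "ln - 1" "k + 1"] lln by simp
      moreover have eq: "k + 1 + int (ln - 1) = k + l" using lln False by simp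
      ultimately show ?thesis by (simp only: eq less_imp_le)
    qed
    have "det2 (e k) (e (k + 1)) * s (k + l) = s (k + 1) * det2 (e k) (e (k + l)) + (- s k) * det2 (e (k + 1)) (e (k + l))"
      unfolding s_def using cramer_scalar[of "e k" "e (k+1)" "e (k + l)" v] by (simp add: det2_def algebra_simps)
    also have "\<dots> > 0" using k a1 a2 by (intro add_pos_nonneg mult_pos_pos mult_nonneg_nonneg) auto
    finally show "s (k + l) > 0" using D by (simp add: zero_less_mult_iff)
  qed
  then show ?thesis unfolding s_def by blast
qed

lemma frontier_good:
  assumes x: "x \<in> frontier (Ppoly n P)" "x \<notin> Mcurve n P"
  shows "Gd x"
proof -
  have ri: "rel_interior (Ppoly n P) = interior (Ppoly n P)" using Pint by (rule rel_interior_nonempty_interior)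
  have xx: "x \<in> closure (Ppoly n P) - interior (Ppoly n P)" using x(1) unfolding frontier_def .
  have xc: "x \<in> closure (Ppoly n P)" "x \<notin> rel_interior (Ppoly n P)"
    using xx unfolding ri by simp_all
  obtain a where a0: "a \<noteq> 0" and a: "\<And>y. y \<in> closure (Ppoly n P) \<Longrightarrow> a \<bullet> x \<le> a \<bullet> y"
    and "\<And>y. y \<in> rel_interior (Ppoly n P) \<Longrightarrow> a \<bullet> x < a \<bullet> y"
    by (rule supporting_hyperplane_relative_frontier[OF convex_P xc]) blast
  define v where "v = - a"
  have v0: "v \<noteq> 0" using a0 unfolding v_def by simp
  have out: "x + t *\<^sub>R v \<notin> Mcurve n P" if "t \<ge> 0" for t
  proof (cases "t = 0")
    case True then show ?thesis using x by simp
  next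
    case False
    then have tp: "t > 0" using that by simp
    have "a \<bullet> (x + t *\<^sub>R v) = a \<bullet> x - t * (a \<bullet> a)" unfolding v_def by (simp add: inner_diff_right)
    moreover have "a \<bullet> a > 0" using a0 by simp
    ultimately have "a \<bullet> (x + t *\<^sub>R v) < a \<bullet> x" using tp by simp
    then have "x + t *\<^sub>R v \<notin> closure (Ppoly n P)" using a[of "x + t *\<^sub>R v"] by linarith
    moreover have "Mcurve n P \<subseteq> closure (Ppoly n P)" using Mcurve_sub closure_subset by (rule order_trans)
    ultimately show ?thesis by (meson subsetD)
  qed
  obtain k where k: "\<forall>l. 1 \<le> l \<and> l \<le> int n - 1 \<longrightarrow> det2 (e (k + l)) v > 0"
    using good_dir[OF v0] by blast
  define T where "T = 1 + (\<Sum>l\<in>{1..int n - 1}. \<bar>p (k + l) x\<bar> / det2 (e (k + l)) v)"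
  have "(\<Sum>l\<in>{1..int n - 1}. \<bar>p (k + l) x\<bar> / det2 (e (k + l)) v) \<ge> 0"
  proof (rule sum_nonneg)
    fix l assume "l \<in> {1..int n - 1}"
    then have "det2 (e (k + l)) v > 0" using k by simp
    then show "\<bar>p (k + l) x\<bar> / det2 (e (k + l)) v \<ge> 0" by simp
  qed
  then have T0: "T \<ge> 0" unfolding T_def by simp
  have gy: "Gd (x + T *\<^sub>R v)" unfolding Gd_def
  proof (intro exI[of _ k] allI impI)
    fix l :: int assume l: "1 \<le> l \<and> l \<le> int n - 1"
    have sp: "det2 (e (k + l)) v > 0" using k l by blast
    have "\<bar>p (k + l) x\<bar> / det2 (e (k + l)) v \<le> (\<Sum>l\<in>{1..int n - 1}. \<bar>p (k + l) x\<bar> / det2 (e (k + l)) v)"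
      using l k by (intro member_le_sum) auto
    then have "T \<ge> 1 + \<bar>p (k + l) x\<bar> / det2 (e (k + l)) v" unfolding T_def by simp
    then have "T * det2 (e (k + l)) v \<ge> (1 + \<bar>p (k + l) x\<bar> / det2 (e (k + l)) v) * det2 (e (k + l)) v"
      using sp by (simp add: mult_right_mono)
    also have "(1 + \<bar>p (k + l) x\<bar> / det2 (e (k + l)) v) * det2 (e (k + l)) v = det2 (e (k + l)) v + \<bar>p (k + l) x\<bar>"
      using sp by (simp add: field_simps)
    finally have "T * det2 (e (k + l)) v > - p (k + l) x" using sp by linarith
    then show "p (k + l) (x + T *\<^sub>R v) > 0" unfolding p_lin by simp
  qed
  have seg: "closed_segment x (x + T *\<^sub>R v) \<inter> Mcurve n P = {}"
  proof -
    have "closed_segment x (x + T *\<^sub>R v) \<subseteq> {x + t *\<^sub>R v | t. t \<ge> 0}"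
    proof
      fix y assume "y \<in> closed_segment x (x + T *\<^sub>R v)"
      then obtain u where u: "0 \<le> u" "u \<le> 1" "y = (1 - u) *\<^sub>R x + u *\<^sub>R (x + T *\<^sub>R v)"
        unfolding closed_segment_def by blast
      then have "y = x + (u * T) *\<^sub>R v" by (simp add: algebra_simps)
      moreover have "u * T \<ge> 0" using u T0 by simp
      ultimately show "y \<in> {x + t *\<^sub>R v | t. t \<ge> 0}" by blast
    qed
    moreover have "{x + t *\<^sub>R v | t. t \<ge> 0} \<inter> Mcurve n P = {}" using out by auto
    ultimately show ?thesis by auto
  qed
  show ?thesis by (rule conn_Gd[OF connected_segment seg ends_in_segment(2) ends_in_segment(1) gy])
qed

end



lemma sign_contra:
  fixes q :: "int \<Rightarrow> real" and n :: nat
  assumes n2: "n \<ge> 2" and anti: "\<forall>j. q (j + int n) = - q j"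
    and good: "\<forall>l. 1 \<le> l \<and> l \<le> int n - 1 \<longrightarrow> q (k + l) > 0"
    and h1: "q (i - 1) = \<beta> * t * A" and h2: "q i = - (\<beta> * (1 - t) * B)"
    and h3: "(\<Sum>l<n - 1. q (i + int l)) = \<beta> * t * K"
    and A: "A > 0" and B: "B > 0" and K: "K > 0" and t: "0 \<le> t" "t \<le> 1"
  shows False
proof -
  have per: "\<forall>j. q (j + 2 * int n) = q j"
  proof
    fix j have "q (j + 2 * int n) = q ((j + int n) + int n)" by (simp add: algebra_simps)
    also have "\<dots> = - q (j + int n)" using anti by blast
    also have "\<dots> = q j" using anti by simp
    finally show "q (j + 2 * int n) = q j" .
  qed
  define r where "r = (i - k) mod (2 * int n)"
  define z where "z = (i - k) div (2 * int n)"
  define k' where "k' = i - r"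
  have r: "0 \<le> r" "r < 2 * int n" unfolding r_def using n2 by simp_all
  have ik: "i = k' + r" unfolding k'_def by simp
  have e0: "(i - k) div (2 * int n) * (2 * int n) + (i - k) mod (2 * int n) = i - k" by (rule div_mult_mod_eq)
  have kk: "k' = k + z * (2 * int n)" unfolding k'_def r_def z_def using e0 by linarith
  have pos: "q (k' + m) > 0" if "1 \<le> m" "m \<le> int n - 1" for m
  proof -
    have "q (k' + m) = q ((k + m) + z * (2 * int n))" unfolding kk by (simp add: algebra_simps)
    also have "\<dots> = q (k + m)" using per_int[OF per] by blast
    finally show ?thesis using good that by simp
  qed
  have neg: "q (k' + m) < 0" if "int n + 1 \<le> m" "m \<le> 2 * int n - 1" for m
  proof -
    have "q (k' + m) = q ((k' + (m - int n)) + int n)" by (simp add: algebra_simps)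
    also have "\<dots> = - q (k' + (m - int n))" using anti by blast
    finally show ?thesis using pos[of "m - int n"] that by simp
  qed
  have sign1: "\<beta> * (1 - t) \<ge> 0" if "\<beta> * t > 0"
  proof -
    have "\<beta> > 0" using that t by (simp add: zero_less_mult_iff)
    then show ?thesis using t by simp
  qed
  have sign2: "\<beta> * (1 - t) \<le> 0" if "\<beta> * t < 0"
  proof -
    have "\<beta> < 0" using that t by (simp add: mult_less_0_iff)
    then show ?thesis using t by (simp add: mult_le_0_iff)
  qed
  have q1: "\<beta> * t > 0 \<longleftrightarrow> q (i - 1) > 0" unfolding h1 using A by (simp add: zero_less_mult_iff)
  have q1': "\<beta> * t < 0 \<longleftrightarrow> q (i - 1) < 0" unfolding h1 using A by (simp add: mult_less_0_iff)
  have q2: "\<beta> * (1 - t) \<ge> 0 \<longleftrightarrow> q i \<le> 0" unfolding h2 using B by (simp add: zero_le_mult_iff)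
  have q2': "\<beta> * (1 - t) \<le> 0 \<longleftrightarrow> q i \<ge> 0" unfolding h2 using B by (simp add: mult_le_0_iff)
  have q3: "\<beta> * t > 0 \<longleftrightarrow> (\<Sum>l<n - 1. q (i + int l)) > 0" unfolding h3 using K by (simp add: zero_less_mult_iff)
  have q3': "\<beta> * t < 0 \<longleftrightarrow> (\<Sum>l<n - 1. q (i + int l)) < 0" unfolding h3 using K by (simp add: mult_less_0_iff)
  have split: "(\<Sum>l<n - 1. q (i + int l)) = q i + (\<Sum>l<n - 2. q (i + 1 + int l))"
  proof -
    have "n - 1 = Suc (n - 2)" using n2 by simp
    then have "(\<Sum>l<n - 1. q (i + int l)) = (\<Sum>l<Suc (n - 2). q (i + int l))" by simp
    also have "\<dots> = q (i + int 0) + (\<Sum>l<n - 2. q (i + int (Suc l)))" by (rule sum.lessThan_Suc_shift)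
    finally show ?thesis by (simp add: algebra_simps)
  qed
  consider "2 \<le> r \<and> r \<le> int n - 1" | "int n + 2 \<le> r \<and> r \<le> 2 * int n - 1" | "r = 0" | "r = 1" | "r = int n" | "r = int n + 1"
    using r by linarith
  then show False
  proof cases
    case 1
    have "q (i - 1) > 0" using pos[of "r - 1"] 1 ik by (simp add: algebra_simps)
    moreover have "q i > 0" using pos[of r] 1 ik by simp
    ultimately show False using q1 q2 sign1 by auto
  next
    case 2
    have "q (i - 1) < 0" using neg[of "r - 1"] 2 ik by (simp add: algebra_simps)
    moreover have "q i < 0" using neg[of r] 2 ik by simp
    ultimately show False using q1' q2' sign2 by auto
  next
    case 3
    have "q (i - 1) = q ((k' + (2 * int n - 1)) - 2 * int n)" using 3 ik by (simp add: algebra_simps)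
    also have "\<dots> = q (k' + (2 * int n - 1))"
    proof -
      have eqi: "k' + (2 * int n - 1) = (k' + (2 * int n - 1)) - 2 * int n + 2 * int n" by simp
      have "q (k' + (2 * int n - 1)) = q ((k' + (2 * int n - 1)) - 2 * int n)"
        by (subst eqi, rule per[rule_format])
      then show ?thesis by simp
    qed
    finally have "q (i - 1) < 0" using neg[of "2 * int n - 1"] n2 by simp
    then have s: "(\<Sum>l<n - 1. q (i + int l)) < 0" using q1' q3' by simp
    have "(\<Sum>l<n - 2. q (i + 1 + int l)) \<ge> 0"
    proof (rule sum_nonneg)
      fix l assume "l \<in> {..<n - 2}"
      then have ll: "int l + 2 \<le> int n" by auto
      have "q (k' + (1 + int l)) > 0" using pos[of "1 + int l"] ll by simp
      then show "q (i + 1 + int l) \<ge> 0" using 3 ik by (simp add: algebra_simps)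
    qed
    then have "q i < 0" using s split by simp
    moreover have "\<beta> * (1 - t) \<le> 0" using sign2 q1' \<open>q (i - 1) < 0\<close> by blast
    ultimately show False using q2' by linarith
  next
    case 4
    have "(\<Sum>l<n - 1. q (i + int l)) > 0"
    proof (rule sum_pos)
      show "finite {..<n - 1}" by simp
      show "{..<n - 1} \<noteq> {}" using n2 by (simp add: lessThan_empty_iff)
      fix l assume "l \<in> {..<n - 1}"
      then have ll: "int l + 1 \<le> int n - 1" by auto
      have "q (k' + (1 + int l)) > 0" using pos[of "1 + int l"] ll by simp
      then show "q (i + int l) > 0" using 4 ik by (simp add: algebra_simps)
    qed
    then have "\<beta> * t > 0" using q3 by simp
    moreover have "q i > 0" using pos[of 1] 4 ik n2 by simp
    ultimately show False using q2 sign1 by auto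
  next
    case 5
    have "q (i - 1) > 0" using pos[of "int n - 1"] 5 ik n2 by (simp add: algebra_simps)
    then have s: "(\<Sum>l<n - 1. q (i + int l)) > 0" using q1 q3 by simp
    have "(\<Sum>l<n - 2. q (i + 1 + int l)) \<le> 0"
    proof (rule sum_nonpos)
      fix l assume "l \<in> {..<n - 2}"
      then have ll: "int l + 2 \<le> int n" by auto
      have "q (k' + (int n + 1 + int l)) < 0" using neg[of "int n + 1 + int l"] ll by simp
      then show "q (i + 1 + int l) \<le> 0" using 5 ik by (simp add: algebra_simps)
    qed
    then have "q i > 0" using s split by simp
    then show False using q1 q2 sign1 \<open>q (i - 1) > 0\<close> by auto
  next
    case 6
    have "(\<Sum>l<n - 1. q (i + int l)) < 0"
    proof -
      have "(\<Sum>l<n - 1. - q (i + int l)) > 0"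
      proof (rule sum_pos)
        show "finite {..<n - 1}" by simp
        show "{..<n - 1} \<noteq> {}" using n2 by (simp add: lessThan_empty_iff)
        fix l assume "l \<in> {..<n - 1}"
        then have ll: "int l + 1 \<le> int n - 1" by auto
        have "q (k' + (int n + 1 + int l)) < 0" using neg[of "int n + 1 + int l"] ll by simp
        then show "- q (i + int l) > 0" using 6 ik by (simp add: algebra_simps)
      qed
      then show ?thesis by (simp add: sum_negf)
    qed
    then have "\<beta> * t < 0" using q3' by simp
    moreover have "q i < 0" using neg[of "int n + 1"] 6 ik n2 by simp
    ultimately show False using q2' sign2 by auto
  qed
qed




context setting begin

definition b :: "int \<Rightarrow> real" where "b j = betaf n U alpha j"
definition g :: "int \<Rightarrow> real" where "g j = alpha j * d j"

lemma g_sym: "g (j + int n) = - g j" unfolding g_def using alpha_sym[of j] d_sym[of j] by simp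

lemma betaf_nat: "b j = 1/2 * (\<Sum>l<n. g (j + int l))"
proof -
  have img: "{j..j + int n - 1} = (\<lambda>l. j + int l) ` {..<n}"
  proof (intro set_eqI iffI)
    fix m assume "m \<in> {j..j + int n - 1}"
    then have "m = j + int (nat (m - j))" "nat (m - j) < n" by auto
    then show "m \<in> (\<lambda>l. j + int l) ` {..<n}" by blast
  next
    fix m assume "m \<in> (\<lambda>l. j + int l) ` {..<n}"
    then show "m \<in> {j..j + int n - 1}" by auto
  qed
  have inj: "inj_on (\<lambda>l. j + int l) {..<n}" by (auto simp: inj_on_def)
  have "(\<Sum>m\<in>{j..j + int n - 1}. alpha m * det2 (U m) (U (m + 1))) = (\<Sum>m\<in>{j..j + int n - 1}. g m)"
    unfolding g_def d_def by simp
  also have "\<dots> = (\<Sum>l<n. g (j + int l))" unfolding img by (simp add: sum.reindex[OF inj])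
  finally show ?thesis unfolding b_def betaf_def by simp
qed

lemma beta_step: "b i = b (i - 1) - g (i - 1)"
proof -
  obtain n' where n': "n = Suc n'" using n2 by (cases n) auto
  have s1: "(\<Sum>l<n. g (i + int l)) = (\<Sum>l<n'. g (i + int l)) + g (i + int n')"
    unfolding n' by (rule sum.lessThan_Suc)
  have s2: "(\<Sum>l<n. g (i - 1 + int l)) = g (i - 1 + int 0) + (\<Sum>l<n'. g (i - 1 + int (Suc l)))"
    unfolding n' by (rule sum.lessThan_Suc_shift)
  have s3: "(\<Sum>l<n'. g (i - 1 + int (Suc l))) = (\<Sum>l<n'. g (i + int l))" by (simp add: algebra_simps)
  have "g (i + int n') = g ((i - 1) + int n)" unfolding n' by (simp add: algebra_simps)
  also have "\<dots> = - g (i - 1)" by (rule g_sym)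
  finally have s4: "g (i + int n') = - g (i - 1)" .
  show ?thesis unfolding betaf_nat using s1 s2 s3 s4 by simp
qed

lemma e_dV: "e j = d j *\<^sub>R V j" unfolding V_def' using d_pos[of j] by simp

lemma N_left: "Nh n U P alpha (i - 1) = M i + b i *\<^sub>R V (i - 1)"
proof -
  have Mi: "M i = M (i - 1) + alpha (i - 1) *\<^sub>R e (i - 1)" using Mdiff[of "i - 1"] by (simp add: algebra_simps)
  have "Nh n U P alpha (i - 1) = M (i - 1) + b (i - 1) *\<^sub>R V (i - 1)"
    unfolding Nh_def M_def b_def V_def by simp
  also have "\<dots> = M i + (b (i - 1) - alpha (i - 1) * d (i - 1)) *\<^sub>R V (i - 1)"
    unfolding Mi e_dV[of "i - 1"] by (simp add: algebra_simps)
  also have "\<dots> = M i + b i *\<^sub>R V (i - 1)" using beta_step[of i] unfolding g_def by simp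
  finally show ?thesis .
qed

lemma N_right: "Nh n U P alpha i = M i + b i *\<^sub>R V i"
  unfolding Nh_def M_def b_def V_def by simp

lemma sbp:
  "(\<Sum>l<Suc m. det2 (U (s + int l)) (M (s + int l + 1) - M (s + int l)))
     = det2 (U (s + int m)) (M (s + int m + 1) - X) - det2 (U s) (M s - X)
       - (\<Sum>l<m. det2 (e (s + int l)) (M (s + int l + 1) - X))"
proof (induction m)
  case 0
  show ?case by (simp add: det2_def algebra_simps)
next
  case (Suc m)
  have st: "s + int (Suc m) = s + int m + 1" by simp
  have "(\<Sum>l<Suc (Suc m). det2 (U (s + int l)) (M (s + int l + 1) - M (s + int l)))
      = (\<Sum>l<Suc m. det2 (U (s + int l)) (M (s + int l + 1) - M (s + int l)))
        + det2 (U (s + int m + 1)) (M (s + int m + 1 + 1) - M (s + int m + 1))"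
    by (simp add: st add_ac)
  also have "\<dots> = det2 (U (s + int m)) (M (s + int m + 1) - X) - det2 (U s) (M s - X)
       - (\<Sum>l<m. det2 (e (s + int l)) (M (s + int l + 1) - X))
       + det2 (U (s + int m + 1)) (M (s + int m + 1 + 1) - M (s + int m + 1))"
    using Suc.IH by simp
  also have "\<dots> = det2 (U (s + int m + 1)) (M (s + int m + 1 + 1) - X) - det2 (U s) (M s - X)
       - ((\<Sum>l<m. det2 (e (s + int l)) (M (s + int l + 1) - X)) + det2 (e (s + int m)) (M (s + int m + 1) - X))"
    unfolding e_def by (simp add: det2_def algebra_simps)
  also have "\<dots> = det2 (U (s + int (Suc m))) (M (s + int (Suc m) + 1) - X) - det2 (U s) (M s - X)
       - (\<Sum>l<Suc m. det2 (e (s + int l)) (M (s + int l + 1) - X))"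
    by (simp add: st add_ac)
  finally show ?case .
qed

end



context setting begin

lemma C_not_Gd:
  assumes C: "C \<in> closed_segment (Nh n U P alpha (i - 1)) (Nh n U P alpha i)"
  shows "\<not> Gd C"
proof
  assume G: "Gd C"
  then obtain k where good: "\<forall>l. 1 \<le> l \<and> l \<le> int n - 1 \<longrightarrow> p (k + l) C > 0" unfolding Gd_def by blast
  obtain t where t: "0 \<le> t" "t \<le> 1" and Ceq: "C = (1 - t) *\<^sub>R Nh n U P alpha (i - 1) + t *\<^sub>R Nh n U P alpha i"
    using C unfolding closed_segment_def by blast
  define W where "W = (1 - t) *\<^sub>R V (i - 1) + t *\<^sub>R V i"
  define \<beta> where "\<beta> = b i"
  have CW: "C = M i + \<beta> *\<^sub>R W" unfolding Ceq N_left[of i] N_right[of i] W_def \<beta>_def by (simp add: algebra_simps)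
  have detW: "det2 a W = (1 - t) * det2 a (V (i - 1)) + t * det2 a (V i)" for a
    unfolding W_def by (simp add: det2_def algebra_simps)
  have v1: "det2 (e (i - 1)) (V (i - 1)) = 0" unfolding V_def' det2_scaleR_inv by (simp add: det2_self)
  have v2: "det2 (e (i - 1)) (V i) = det2 (e (i - 1)) (e i) / d i" unfolding V_def' det2_scaleR_inv by simp
  have v3: "det2 (e i) (V i) = 0" unfolding V_def' det2_scaleR_inv by (simp add: det2_self)
  have v4: "det2 (e i) (V (i - 1)) = - (det2 (e (i - 1)) (e i) / d (i - 1))"
    unfolding V_def' det2_scaleR_inv by (simp add: det2_swap[of "e i"])
  have u1: "det2 (U (i - 1)) (V (i - 1)) = 1" by (rule UV1)
  have u3: "det2 (U i) (V (i - 1)) = 1" using UV2[of "i - 1"] by simp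
  have u4: "det2 (U i) (V i) = 1" by (rule UV1)
  define A where "A = det2 (e (i - 1)) (e i) / d i"
  define B where "B = det2 (e (i - 1)) (e i) / d (i - 1)"
  define \<kappa> where "\<kappa> = det2 (U (i - 1)) (V i)"
  have A: "A > 0" unfolding A_def using e_turn[of i] d_pos[of i] by simp
  have B: "B > 0" unfolding B_def using e_turn[of i] d_pos[of "i - 1"] by simp
  have K: "1 - \<kappa> > 0" unfolding \<kappa>_def V_def' det2_scaleR_inv using kappa[of i] d_pos[of i] by simp
  have Mi: "M i = M (i - 1) + alpha (i - 1) *\<^sub>R e (i - 1)" using Mdiff[of "i - 1"] by (simp add: algebra_simps)
  have h1: "p (i - 1) C = \<beta> * t * A"
  proof -
    have "p (i - 1) C = det2 (e (i - 1)) (\<beta> *\<^sub>R W + alpha (i - 1) *\<^sub>R e (i - 1))"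
      unfolding p_def CW Mi by (simp add: algebra_simps)
    also have "\<dots> = \<beta> * det2 (e (i - 1)) W" by (simp add: det2_def algebra_simps)
    also have "\<dots> = \<beta> * t * A" unfolding detW v1 v2 A_def by simp
    finally show ?thesis .
  qed
  have h2: "p i C = - (\<beta> * (1 - t) * B)"
  proof -
    have "p i C = \<beta> * det2 (e i) W" unfolding p_def CW by (simp add: det2_def algebra_simps)
    also have "\<dots> = - (\<beta> * (1 - t) * B)" unfolding detW v3 v4 B_def by simp
    finally show ?thesis .
  qed
  have h3: "(\<Sum>l<n - 1. p (i + int l) C) = \<beta> * t * (1 - \<kappa>)"
  proof -
    have sn: "Suc (n - 1) = n" using n2 by simp
    have L: "(\<Sum>l<Suc (n - 1). det2 (U (i + int l)) (M (i + int l + 1) - M (i + int l))) = 2 * \<beta>"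
    proof -
      have "det2 (U j) (M (j + 1) - M j) = g j" for j
        unfolding Mdiff g_def d_def e_def by (simp add: det2_def algebra_simps)
      then have "(\<Sum>l<Suc (n - 1). det2 (U (i + int l)) (M (i + int l + 1) - M (i + int l))) = (\<Sum>l<n. g (i + int l))"
        unfolding sn by simp
      then show ?thesis unfolding \<beta>_def betaf_nat by simp
    qed
    have idx: "i + int (n - 1) = (i - 1) + int n" using n2 by simp
    have R1: "det2 (U (i + int (n - 1))) (M (i + int (n - 1) + 1) - C) = \<beta> * ((1 - t) + t * \<kappa>)"
    proof -
      have "U (i + int (n - 1)) = - U (i - 1)" unfolding idx by (rule Usym)
      moreover have "M (i + int (n - 1) + 1) = M i" unfolding idx using M_n[of i] by (simp add: algebra_simps)
      ultimately have "det2 (U (i + int (n - 1))) (M (i + int (n - 1) + 1) - C) = \<beta> * det2 (U (i - 1)) W"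
        unfolding CW by (simp add: det2_def algebra_simps)
      then show ?thesis unfolding detW u1 \<kappa>_def by simp
    qed
    have R2: "det2 (U i) (M i - C) = - \<beta>"
    proof -
      have "det2 (U i) (M i - C) = - \<beta> * det2 (U i) W" unfolding CW by (simp add: det2_def algebra_simps)
      then show ?thesis unfolding detW u3 u4 by simp
    qed
    have R3: "det2 (e j) (M (j + 1) - C) = - p j C" for j
      unfolding p_def using Mdiff[of j] by (simp add: det2_def algebra_simps)
    have "2 * \<beta> = \<beta> * ((1 - t) + t * \<kappa>) - (- \<beta>) - (\<Sum>l<n - 1. - p (i + int l) C)"
      using sbp[where m="n - 1" and s=i and X=C] unfolding L R1 R2 R3 by simp
    then have "2 * \<beta> = \<beta> * ((1 - t) + t * \<kappa>) + \<beta> + (\<Sum>l<n - 1. p (i + int l) C)"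
      by (simp add: sum_negf)
    then have "(\<Sum>l<n - 1. p (i + int l) C) = 2 * \<beta> - \<beta> * ((1 - t) + t * \<kappa>) - \<beta>" by linarith
    also have "\<dots> = \<beta> * t * (1 - \<kappa>)" by (simp add: algebra_simps)
    finally show ?thesis .
  qed
  have anti: "\<forall>j. p (j + int n) C = - p j C" using p_anti by blast
  show False using sign_contra[of n "\<lambda>j. p j C", OF n2 anti good h1 h2 h3 A B K t] .
qed

end

theorem lemma4p5:
  fixes n :: nat and U P :: "int \<Rightarrow> real^2" and c :: real and alpha :: "int \<Rightarrow> real"
    and i :: int and C :: "real^2"
  assumes n2: "n \<ge> 2"
    and U: "sym_convex_polygon n U"
    and c: "c > 0"
    and Pper: "\<forall>k. P (k + 2 * int n) = P k"
    and Pedge: "\<forall>k. \<exists>t\<ge>0. P (k + 1) - P k = t *\<^sub>R Vh U k"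
    and Psym: "\<forall>k. P k - P (k + int n) = (2 * c) *\<^sub>R U k"
    and Pint: "interior (Ppoly n P) \<noteq> {}"
    and alpha: "\<forall>k. Mv n P (k + 1) - Mv n P k = alpha k *\<^sub>R (U (k + 1) - U k)"
    and i: "1 \<le> i" "i \<le> 2 * int n"
    and C: "C \<in> closed_segment (Nh n U P alpha (i - 1)) (Nh n U P alpha i)"
  shows "C \<in> Mbar n P"
proof -
  interpret S: setting n U P c alpha
    by (rule setting.intro) (fact n2 U c Pper Pedge Psym Pint alpha)+
  have nG: "\<not> S.Gd C" using S.C_not_Gd[OF C] .
  show ?thesis unfolding Mbar_def
  proof
    assume "C \<in> exteriorM n P"
    then obtain \<gamma> where \<gamma>: "path \<gamma>" "pathstart \<gamma> = C" "pathfinish \<gamma> \<in> frontier (Ppoly n P)"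
      "path_image \<gamma> \<inter> Mcurve n P = {}"
      unfolding exteriorM_def by blast
    have "pathfinish \<gamma> \<notin> Mcurve n P" using \<gamma>(4) pathfinish_in_path_image[of \<gamma>] by blast
    then have "S.Gd (pathfinish \<gamma>)" using S.frontier_good \<gamma>(3) by blast
    then have "S.Gd (pathstart \<gamma>)"
      by (rule S.conn_Gd[OF connected_path_image[OF \<gamma>(1)] \<gamma>(4) pathfinish_in_path_image pathstart_in_path_image])
    then show False using nG \<gamma>(2) by simp
  qed
qed



end
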